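(* Let $G$ be a finite group with $|G|\ge3$. Then $\mathsf D(G)\le\omega(G)$, and equality holds if $G$ is abelian.
   Context: For a finite group $G$ (multiplicative, identity $1_G$), $\mathcal F(G)$ is the free abelian monoid with basis $G$ (sequences $S=g_1\boldsymbol{\cdot}\ldots\boldsymbol{\cdot}g_\ell$, operation $\boldsymbol{\cdot}$, length $|S|=\ell$). $\pi(S)=\{g_{\tau(1)}\cdots g_{\tau(\ell)}:\tau\text{ a permutation of }[1,\ell]\}$, $\mathcal B(G)=\{S\in\mathcal F(G):1_G\in\pi(S)\}$, $\mathcal A(G)$ its set of atoms, and $\mathsf D(G)=\max\{|U|:U\in\mathcal A(G)\}$. For an atomic monoid $H$ and $b\in H$, $\omega(H,b)$ is the smallest $N\in\mathbb N_0\cup\{\infty\}$ such that for all $n\in\mathbb N$ and $a_1,\dots,a_n\in H$ with $b\mid a_1\cdots a_n$ (in $H$), there is $\Omega\subset[1,n]$ with $|\Omega|\le N$ and $b\mid\prod_{\nu\in\Omega}a_\nu$ (in $H$). $\omega(H)=\sup\{\omega(H,u):u\in\mathcal A(H)\}$, and $\omega(G)=\omega(\mathcal B(G))$. *)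

theory Defs
  imports "HOL-Algebra.Group" "HOL-Library.Multiset" "HOL-Library.Extended_Nat"
begin

text \<open>Sequences over G are finite multisets of elements of the carrier.
  The product of a list of group elements, in the given order.\<close>

definition list_prod :: "('a, 'b) monoid_scheme \<Rightarrow> 'a list \<Rightarrow> 'a" where
  "list_prod G xs = foldr (\<lambda>x y. x \<otimes>\<^bsub>G\<^esub> y) xs \<one>\<^bsub>G\<^esub>"

definition seq_prods :: "('a, 'b) monoid_scheme \<Rightarrow> 'a multiset \<Rightarrow> 'a set" where
  "seq_prods G S = {list_prod G xs | xs. mset xs = S}"

text \<open>The monoid of product-one sequences B(G) (as a set of sequences; operation is +).\<close>
definition zss :: "('a, 'b) monoid_scheme \<Rightarrow> 'a multiset set" where
  "zss G = {S. set_mset S \<subseteq> carrier G \<and> \<one>\<^bsub>G\<^esub> \<in> seq_prods G S}"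

definition zss_dvd :: "('a, 'b) monoid_scheme \<Rightarrow> 'a multiset \<Rightarrow> 'a multiset \<Rightarrow> bool" where
  "zss_dvd G b a \<longleftrightarrow> (\<exists>c \<in> zss G. a = b + c)"

text \<open>Atoms of B(G): non-units (the only unit is the empty sequence) that are not
  a product of two non-units.\<close>
definition zss_atoms :: "('a, 'b) monoid_scheme \<Rightarrow> 'a multiset set" where
  "zss_atoms G = {U \<in> zss G. U \<noteq> {#} \<and>
      (\<forall>A \<in> zss G. \<forall>B \<in> zss G. U = A + B \<longrightarrow> A = {#} \<or> B = {#})}"

definition davenport :: "('a, 'b) monoid_scheme \<Rightarrow> nat" where
  "davenport G = Max (size ` zss_atoms G)"

definition omega_elem :: "('a, 'b) monoid_scheme \<Rightarrow> 'a multiset \<Rightarrow> enat" where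
  "omega_elem G b = Inf {N :: enat. \<forall>n :: nat. n \<ge> 1 \<longrightarrow>
      (\<forall>a :: nat \<Rightarrow> 'a multiset. (\<forall>i \<in> {1..n}. a i \<in> zss G) \<longrightarrow>
         zss_dvd G b (\<Sum>i\<in>{1..n}. a i) \<longrightarrow>
         (\<exists>\<Omega> \<subseteq> {1..n}. enat (card \<Omega>) \<le> N \<and> zss_dvd G b (\<Sum>i\<in>\<Omega>. a i)))}"

definition omega_grp :: "('a, 'b) monoid_scheme \<Rightarrow> enat" where
  "omega_grp G = Sup (omega_elem G ` zss_atoms G)"

end

theory Submission
  imports Defs
begin


lemma list_prod_Nil[simp]: "list_prod G [] = \<one>\<^bsub>G\<^esub>"
  by (simp add: list_prod_def)
lemma list_prod_Cons[simp]: "list_prod G (x#xs) = x \<otimes>\<^bsub>G\<^esub> list_prod G xs"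
  by (simp add: list_prod_def)

lemma list_prod_closed:
  assumes "monoid G" "set xs \<subseteq> carrier G" shows "list_prod G xs \<in> carrier G"
  using assms(2) by (induction xs) (auto intro: monoid.m_closed[OF assms(1)] monoid.one_closed[OF assms(1)])

lemma list_prod_append:
  assumes "monoid G" "set xs \<subseteq> carrier G" "set ys \<subseteq> carrier G"
  shows "list_prod G (xs @ ys) = list_prod G xs \<otimes>\<^bsub>G\<^esub> list_prod G ys"
  using assms(2)
proof (induction xs)
  case Nil then show ?case using list_prod_closed[OF assms(1,3)] monoid.l_one[OF assms(1)] by simp
next
  case (Cons x xs)
  then show ?case using list_prod_closed[OF assms(1,3)] list_prod_closed[OF assms(1), of xs]
    by (simp add: monoid.m_assoc[OF assms(1)])
qed

lemma list_prod_rev_inv: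
  assumes "group G" "set xs \<subseteq> carrier G"
  shows "list_prod G (rev (map (m_inv G) xs)) = inv\<^bsub>G\<^esub> (list_prod G xs)"
  using assms(2)
proof (induction xs)
  case Nil then show ?case using assms(1) by (simp add: monoid.inv_one group.is_monoid)
next
  case (Cons x xs)
  interpret group G by fact
  have c: "set (rev (map (m_inv G) xs)) \<subseteq> carrier G" using Cons by auto
  show ?case using Cons list_prod_closed[OF monoid_axioms c] list_prod_closed[OF monoid_axioms, of xs]
    by (simp add: list_prod_append[OF monoid_axioms c] inv_mult_group)
qed

lemma list_prod_perm:
  assumes "comm_monoid G" "set xs \<subseteq> carrier G" "mset xs = mset ys"
  shows "list_prod G xs = list_prod G ys"
  using assms(2,3)
proof (induction xs arbitrary: ys)
  case Nil then show ?case by simp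
next
  case (Cons x xs)
  interpret comm_monoid G by fact
  have "x \<in> set ys" using Cons.prems(2) by (metis list.set_intros(1) set_mset_mset)
  then obtain ys1 ys2 where ys: "ys = ys1 @ x # ys2" by (meson split_list)
  have m: "mset xs = mset (ys1 @ ys2)" using Cons.prems(2) ys by simp
  have sy: "set ys \<subseteq> carrier G" using Cons.prems by (metis set_mset_mset)
  have "list_prod G xs = list_prod G (ys1 @ ys2)" using Cons m by auto
  moreover have "list_prod G ys = x \<otimes>\<^bsub>G\<^esub> list_prod G (ys1 @ ys2)"
    using sy ys list_prod_closed[OF monoid_axioms, of ys1] list_prod_closed[OF monoid_axioms, of ys2]
    by (simp add: list_prod_append[OF monoid_axioms] m_lcomm)
  ultimately show ?case by simp
qed

lemma zss_empty[simp]: "{#} \<in> zss G"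
  unfolding zss_def seq_prods_def by force

lemma zss_add:
  assumes "monoid G" "A \<in> zss G" "B \<in> zss G" shows "A + B \<in> zss G"
proof -
  obtain xs where xs: "mset xs = A" "list_prod G xs = \<one>\<^bsub>G\<^esub>" using assms(2) unfolding zss_def seq_prods_def by auto
  obtain ys where ys: "mset ys = B" "list_prod G ys = \<one>\<^bsub>G\<^esub>" using assms(3) unfolding zss_def seq_prods_def by auto
  have c: "set xs \<subseteq> carrier G" "set ys \<subseteq> carrier G" using xs ys assms unfolding zss_def by auto
  have "list_prod G (xs @ ys) = \<one>\<^bsub>G\<^esub>" using list_prod_append[OF assms(1) c] xs ys monoid.l_one[OF assms(1)] monoid.one_closed[OF assms(1)] by simp
  moreover have "mset (xs @ ys) = A + B" using xs ys by simp
  moreover have "set_mset (A + B) \<subseteq> carrier G" using assms(2,3) unfolding zss_def by auto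
  ultimately show ?thesis unfolding zss_def seq_prods_def by (smt (verit) mem_Collect_eq)
qed

lemma zss_sum:
  assumes "monoid G" "\<forall>i\<in>I. a i \<in> zss G" shows "(\<Sum>i\<in>I. a i) \<in> zss G"
proof (cases "finite I")
  case True then show ?thesis using assms(2) by (induction I rule: finite_induct) (auto intro: zss_add[OF assms(1)])
qed simp

lemma zss_inv:
  assumes "group G" "A \<in> zss G" shows "image_mset (m_inv G) A \<in> zss G"
proof -
  interpret group G by fact
  obtain xs where xs: "mset xs = A" "list_prod G xs = \<one>\<^bsub>G\<^esub>" using assms(2) unfolding zss_def seq_prods_def by auto
  have c: "set xs \<subseteq> carrier G" using xs assms unfolding zss_def by auto
  have "list_prod G (rev (map (m_inv G) xs)) = \<one>\<^bsub>G\<^esub>" using list_prod_rev_inv[OF assms(1) c] xs by simp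
  moreover have "mset (rev (map (m_inv G) xs)) = image_mset (m_inv G) A" using xs by simp
  moreover have "set_mset (image_mset (m_inv G) A) \<subseteq> carrier G" using c xs by auto
  ultimately show ?thesis unfolding zss_def seq_prods_def by (smt (verit) mem_Collect_eq)
qed

lemma inv_inv_mset:
  assumes "group G" "set_mset A \<subseteq> carrier G"
  shows "image_mset (m_inv G) (image_mset (m_inv G) A) = A"
proof -
  have "image_mset (m_inv G) (image_mset (m_inv G) A) = image_mset id A"
    unfolding multiset.map_comp by (rule image_mset_cong) (use assms group.inv_inv in auto)
  then show ?thesis by simp
qed

lemma atom_inv:
  assumes "group G" "U \<in> zss_atoms G" shows "image_mset (m_inv G) U \<in> zss_atoms G"
proof -
  have U: "U \<in> zss G" "U \<noteq> {#}" using assms(2) unfolding zss_atoms_def by auto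
  have cU: "set_mset U \<subseteq> carrier G" using U unfolding zss_def by auto
  { fix A B assume AB: "A \<in> zss G" "B \<in> zss G" "image_mset (m_inv G) U = A + B"
    have cA: "set_mset A \<subseteq> carrier G" "set_mset B \<subseteq> carrier G" using AB unfolding zss_def by auto
    have "U = image_mset (m_inv G) A + image_mset (m_inv G) B"
      using inv_inv_mset[OF assms(1) cU] AB(3) by (metis image_mset_union)
    then have "image_mset (m_inv G) A = {#} \<or> image_mset (m_inv G) B = {#}"
      using assms(2) zss_inv[OF assms(1) AB(1)] zss_inv[OF assms(1) AB(2)] unfolding zss_atoms_def by blast
    then have "A = {#} \<or> B = {#}" by simp }
  then show ?thesis using zss_inv[OF assms(1) U(1)] U(2) unfolding zss_atoms_def by auto
qed



lemma zss_single: assumes "group G" "{#w#} \<in> zss G" shows "w = \<one>\<^bsub>G\<^esub>"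
proof -
  obtain xs where "mset xs = {#w#}" "list_prod G xs = \<one>\<^bsub>G\<^esub>" "w \<in> carrier G"
    using assms unfolding zss_def seq_prods_def by auto
  then show ?thesis using group.is_monoid[OF assms(1)] monoid.r_one by fastforce
qed

lemma zss_I: assumes "set xs \<subseteq> carrier G" "list_prod G xs = \<one>\<^bsub>G\<^esub>" shows "mset xs \<in> zss G"
  using assms unfolding zss_def seq_prods_def by (auto intro: exI[where x=xs])

lemma atom3:
  assumes "group G" "card (carrier G) \<ge> 3"
  shows "\<exists>U \<in> zss_atoms G. size U = 3"
proof -
  interpret group G by fact
  have fin: "finite (carrier G)" using assms(2) card.infinite by fastforce
  have "carrier G - {\<one>\<^bsub>G\<^esub>} \<noteq> {}"
  proof
    assume "carrier G - {\<one>\<^bsub>G\<^esub>} = {}"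
    then have "carrier G \<subseteq> {\<one>\<^bsub>G\<^esub>}" by auto
    then have "card (carrier G) \<le> 1" using card_mono[of "{\<one>\<^bsub>G\<^esub>}"] by fastforce
    then show False using assms(2) by simp
  qed
  then obtain x where x: "x \<in> carrier G" "x \<noteq> \<one>\<^bsub>G\<^esub>" by auto
  have "\<exists>y \<in> carrier G. y \<noteq> \<one>\<^bsub>G\<^esub> \<and> x \<otimes>\<^bsub>G\<^esub> y \<noteq> \<one>\<^bsub>G\<^esub>"
  proof (cases "x \<otimes>\<^bsub>G\<^esub> x = \<one>\<^bsub>G\<^esub>")
    case False then show ?thesis using x by (intro bexI[of _ x]) auto
  next
    case True
    have "\<not> carrier G \<subseteq> {\<one>\<^bsub>G\<^esub>, x}"
    proof
      assume "carrier G \<subseteq> {\<one>\<^bsub>G\<^esub>, x}"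
      then have "card (carrier G) \<le> card {\<one>\<^bsub>G\<^esub>, x}" using fin by (intro card_mono) auto
      also have "\<dots> \<le> 2" by (simp add: card_insert_if)
      finally show False using assms(2) by simp
    qed
    then obtain y where y: "y \<in> carrier G" "y \<noteq> \<one>\<^bsub>G\<^esub>" "y \<noteq> x" by blast
    have "x \<otimes>\<^bsub>G\<^esub> y \<noteq> \<one>\<^bsub>G\<^esub>"
    proof
      assume "x \<otimes>\<^bsub>G\<^esub> y = \<one>\<^bsub>G\<^esub>"
      then have "x \<otimes>\<^bsub>G\<^esub> y = x \<otimes>\<^bsub>G\<^esub> x" using True by simp
      then show False using y x Units_l_cancel[of x y x] by simp
    qed
    then show ?thesis using y by (intro bexI[of _ y]) auto
  qed
  then obtain y where y: "y \<in> carrier G" "y \<noteq> \<one>\<^bsub>G\<^esub>" "x \<otimes>\<^bsub>G\<^esub> y \<noteq> \<one>\<^bsub>G\<^esub>" by auto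
  define z where "z = m_inv G (x \<otimes>\<^bsub>G\<^esub> y)"
  have z1: "z \<in> carrier G" unfolding z_def using x y by simp
  have z2: "z \<noteq> \<one>\<^bsub>G\<^esub>"
  proof
    assume "z = \<one>\<^bsub>G\<^esub>"
    then have "m_inv G z = \<one>\<^bsub>G\<^esub>" by simp
    moreover have "m_inv G z = x \<otimes>\<^bsub>G\<^esub> y" unfolding z_def using x y by simp
    ultimately show False using y by simp
  qed
  note z = z1 z2
  have p: "list_prod G [x,y,z] = \<one>\<^bsub>G\<^esub>" using x y z unfolding z_def
    by (simp add: m_assoc[symmetric])
  have S: "mset [x,y,z] \<in> zss G" using zss_I[OF _ p] x y z by auto
  have "mset [x,y,z] \<in> zss_atoms G"
  proof -
    { fix A B assume AB: "A \<in> zss G" "B \<in> zss G" "mset [x,y,z] = A + B" "A \<noteq> {#}" "B \<noteq> {#}"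
      have "size A + size B = 3" using AB(3) by (metis size_union size_mset length_Cons list.size(3) numeral_3_eq_3 One_nat_def)
      moreover have "size A \<noteq> 0" "size B \<noteq> 0" using AB by auto
      ultimately have "size A = 1 \<or> size B = 1" by linarith
      then obtain w where w: "{#w#} \<in> zss G" "w \<in># mset [x,y,z]"
        using AB by (metis size_1_singleton_mset union_iff union_single_eq_member)
      then have False using zss_single[OF assms(1) w(1)] x y z by auto }
    then show ?thesis using S unfolding zss_atoms_def by auto
  qed
  then show ?thesis by force
qed



lemma zss_E: assumes "A \<in> zss G"
  shows "\<exists>xs. mset xs = A \<and> list_prod G xs = \<one>\<^bsub>G\<^esub> \<and> set xs \<subseteq> carrier G"
proof -
  obtain xs where "mset xs = A" "list_prod G xs = \<one>\<^bsub>G\<^esub>" using assms unfolding zss_def seq_prods_def by auto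
  moreover have "set xs \<subseteq> carrier G" using assms calculation(1) unfolding zss_def by auto
  ultimately show ?thesis by blast
qed

lemma atom_size_le:
  assumes "group G" "finite (carrier G)" "U \<in> zss_atoms G"
  shows "size U \<le> card (carrier G)"
proof (rule ccontr)
  interpret group G by fact
  assume "\<not> size U \<le> card (carrier G)"
  then have big: "card (carrier G) < size U" by simp
  have U: "U \<in> zss G" using assms(3) unfolding zss_atoms_def by auto
  then obtain xs where xs: "mset xs = U" "list_prod G xs = \<one>\<^bsub>G\<^esub>" "set xs \<subseteq> carrier G"
    using zss_E by blast
  define n where "n = length xs"
  have n: "n = size U" using xs(1) unfolding n_def by (metis size_mset)
  define f where "f k = list_prod G (take k xs)" for k
  have fc: "f k \<in> carrier G" for k unfolding f_def
    by (rule list_prod_closed[OF monoid_axioms subset_trans[OF set_take_subset xs(3)]])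
  have "\<not> inj_on f {..<n}"
  proof
    assume "inj_on f {..<n}"
    then have "card (f ` {..<n}) = n" by (simp add: card_image)
    moreover have "card (f ` {..<n}) \<le> card (carrier G)" using fc assms(2) by (intro card_mono) auto
    ultimately show False using big n by simp
  qed
  then obtain i j where ij: "i < j" "j < n" "f i = f j"
    unfolding inj_on_def by (metis lessThan_iff linorder_neqE_nat)
  define T where "T = drop i (take j xs)"
  define R where "R = take i xs @ drop j xs"
  have sT: "set T \<subseteq> carrier G" unfolding T_def using xs(3)
    by (rule subset_trans[OF set_drop_subset subset_trans[OF set_take_subset]])
  have sA: "set (take i xs) \<subseteq> carrier G" "set (drop j xs) \<subseteq> carrier G"
    by (rule subset_trans[OF set_take_subset xs(3)], rule subset_trans[OF set_drop_subset xs(3)])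
  have tj: "take j xs = take i xs @ T" unfolding T_def using ij
    by (metis append_take_drop_id less_imp_le_nat min.absorb1 take_take)
  have "f j = f i \<otimes>\<^bsub>G\<^esub> list_prod G T" unfolding f_def tj
    using list_prod_append[OF monoid_axioms sA(1) sT] .
  then have "f i \<otimes>\<^bsub>G\<^esub> list_prod G T = f i \<otimes>\<^bsub>G\<^esub> \<one>\<^bsub>G\<^esub>" using ij fc by simp
  then have pT: "list_prod G T = \<one>\<^bsub>G\<^esub>"
    using fc list_prod_closed[OF monoid_axioms sT] by simp
  have "\<one>\<^bsub>G\<^esub> = f j \<otimes>\<^bsub>G\<^esub> list_prod G (drop j xs)"
    unfolding f_def using xs(2) list_prod_append[OF monoid_axioms _ sA(2), of "take j xs"] xs(3)
    by (metis append_take_drop_id set_take_subset subset_trans)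
  then have pR: "list_prod G R = \<one>\<^bsub>G\<^esub>" unfolding R_def
    using list_prod_append[OF monoid_axioms sA] ij(3) by (simp add: f_def)
  have sR: "set R \<subseteq> carrier G" unfolding R_def using sA by auto
  have "mset xs = mset (take j xs) + mset (drop j xs)" by (metis append_take_drop_id mset_append)
  then have UTR: "U = mset T + mset R" unfolding R_def using tj xs(1) by simp
  have "T \<noteq> []" unfolding T_def using ij n_def by simp
  moreover have "R \<noteq> []" unfolding R_def using ij n_def by simp
  ultimately show False using assms(3) UTR zss_I[OF sT pT] zss_I[OF sR pR] unfolding zss_atoms_def by auto
qed



lemma mset_nth_sum: "(\<Sum>k<length xs. {#xs!k#}) = mset xs"
proof (induction xs rule: rev_induct)
  case Nil then show ?case by simp
next
  case (snoc x xs)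
  have "(\<Sum>k<length (xs @ [x]). {#(xs @ [x])!k#}) = (\<Sum>k<length xs. {#(xs @ [x])!k#}) + {#x#}"
    by simp
  also have "(\<Sum>k<length xs. {#(xs @ [x])!k#}) = (\<Sum>k<length xs. {#xs!k#})"
    by (rule sum.cong) (auto simp: nth_append)
  finally show ?case using snoc by simp
qed

lemma omega_lower:
  assumes "group G" "U \<in> zss_atoms G" "size U \<ge> 3"
  shows "enat (size U) \<le> omega_elem G (image_mset (m_inv G) U)"
proof -
  interpret group G by fact
  have U: "U \<in> zss G" using assms(2) unfolding zss_atoms_def by auto
  obtain xs where xs: "mset xs = U" "set xs \<subseteq> carrier G" using zss_E[OF U] by blast
  define l where "l = length xs"
  have l: "l = size U" using xs(1) unfolding l_def by (metis size_mset)
  define a where "a i = {#xs!(i-1), m_inv G (xs!(i-1))#}" for i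
  define b where "b = image_mset (m_inv G) U"
  have xc: "xs!(i-1) \<in> carrier G" if "i \<in> {1..l}" for i
  proof -
    have "i - 1 < length xs" using that l_def by auto
    then show ?thesis using xs(2) nth_mem by blast
  qed
  have az: "a i \<in> zss G" if "i \<in> {1..l}" for i
  proof -
    have "set [xs!(i-1), m_inv G (xs!(i-1))] \<subseteq> carrier G" using xc[OF that] by simp
    moreover have "list_prod G [xs!(i-1), m_inv G (xs!(i-1))] = \<one>\<^bsub>G\<^esub>" using xc[OF that] by simp
    ultimately have "mset [xs!(i-1), m_inv G (xs!(i-1))] \<in> zss G" by (rule zss_I)
    then show ?thesis unfolding a_def by simp
  qed
  have anz: "a i \<noteq> {#}" for i by (simp add: a_def)
  have sa: "(\<Sum>i\<in>{1..l}. a i) = U + b"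
  proof -
    have "(\<Sum>i\<in>{1..l}. a i) = (\<Sum>k<l. a (Suc k))" by (simp add: sum.atLeast1_atMost_eq)
    also have "\<dots> = (\<Sum>k<l. {#xs!k#}) + (\<Sum>k<l. {#m_inv G (xs!k)#})"
      unfolding sum.distrib[symmetric] a_def by (rule sum.cong) (simp_all add: multiset_eq_iff)
    also have "(\<Sum>k<l. {#xs!k#}) = U" unfolding l_def xs(1)[symmetric] by (rule mset_nth_sum)
    also have "(\<Sum>k<l. {#m_inv G (xs!k)#}) = (\<Sum>k<length (map (m_inv G) xs). {#(map (m_inv G) xs)!k#})"
      unfolding l_def by (rule sum.cong) auto
    also have "\<dots> = b" unfolding mset_nth_sum b_def xs(1)[symmetric] by simp
    finally show ?thesis .
  qed
  have dv: "zss_dvd G b (\<Sum>i\<in>{1..l}. a i)" unfolding zss_dvd_def sa using U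
    by (intro bexI[of _ U]) (simp_all add: add.commute)
  show ?thesis unfolding omega_elem_def b_def[symmetric]
  proof (rule Inf_greatest)
    fix N assume "N \<in> {N. \<forall>n. n \<ge> 1 \<longrightarrow>
      (\<forall>a :: nat \<Rightarrow> 'a multiset. (\<forall>i \<in> {1..n}. a i \<in> zss G) \<longrightarrow>
         zss_dvd G b (\<Sum>i\<in>{1..n}. a i) \<longrightarrow>
         (\<exists>\<Omega> \<subseteq> {1..n}. enat (card \<Omega>) \<le> N \<and> zss_dvd G b (\<Sum>i\<in>\<Omega>. a i)))}"
    then have P: "\<exists>\<Omega> \<subseteq> {1..l}. enat (card \<Omega>) \<le> N \<and> zss_dvd G b (\<Sum>i\<in>\<Omega>. a i)"
      using l assms(3) az dv by auto
    then obtain \<Omega> C where \<Omega>: "\<Omega> \<subseteq> {1..l}" "enat (card \<Omega>) \<le> N" "C \<in> zss G" "(\<Sum>i\<in>\<Omega>. a i) = b + C"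
      unfolding zss_dvd_def by blast
    have "\<Omega> = {1..l}"
    proof (rule ccontr)
      assume "\<Omega> \<noteq> {1..l}"
      then obtain j where j: "j \<in> {1..l}" "j \<notin> \<Omega>" using \<Omega>(1) by blast
      define Q where "Q = {1..l} - \<Omega> - {j}"
      have "(\<Sum>i\<in>{1..l}. a i) = (\<Sum>i\<in>{1..l} - \<Omega>. a i) + (\<Sum>i\<in>\<Omega>. a i)"
        by (rule sum.subset_diff[OF \<Omega>(1)]) simp
      moreover have "(\<Sum>i\<in>{1..l} - \<Omega>. a i) = a j + (\<Sum>i\<in>Q. a i)"
        unfolding Q_def using j by (intro sum.remove) auto
      ultimately have "U + b = (C + (\<Sum>i\<in>Q. a i) + a j) + b" using sa \<Omega>(4) by (simp add: ac_simps)
      then have UU: "U = (C + (\<Sum>i\<in>Q. a i)) + a j" by simp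
      have "(\<Sum>i\<in>Q. a i) \<in> zss G" using az unfolding Q_def by (intro zss_sum[OF monoid_axioms]) auto
      then have "C + (\<Sum>i\<in>Q. a i) \<in> zss G" using \<Omega>(3) zss_add[OF monoid_axioms] by blast
      then have "C + (\<Sum>i\<in>Q. a i) = {#}" using assms(2) UU az[OF j(1)] anz[of j] unfolding zss_atoms_def by blast
      then have "U = a j" using UU by simp
      then have "size U = 2" by (simp add: a_def)
      then show False using assms(3) by simp
    qed
    then show "enat (size U) \<le> N" using \<Omega>(2) l by simp
  qed
qed

lemma cover:
  assumes "finite I" "M \<subseteq># (\<Sum>i\<in>I. a i)"
  shows "\<exists>\<Omega>\<subseteq>I. card \<Omega> \<le> size M \<and> M \<subseteq># (\<Sum>i\<in>\<Omega>. a i)"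
  using assms(2)
proof (induction M)
  case empty then show ?case by (intro exI[of _ "{}"]) auto
next
  case (add x M)
  have "M \<subseteq># (\<Sum>i\<in>I. a i)" using add.prems by (auto dest: mset_subset_eq_insertD)
  then obtain \<Omega>0 where \<Omega>0: "\<Omega>0 \<subseteq> I" "card \<Omega>0 \<le> size M" "M \<subseteq># (\<Sum>i\<in>\<Omega>0. a i)" using add.IH by blast
  show ?case
  proof (cases "add_mset x M \<subseteq># (\<Sum>i\<in>\<Omega>0. a i)")
    case True then show ?thesis using \<Omega>0 by (intro exI[of _ \<Omega>0]) auto
  next
    case False
    have fin0: "finite \<Omega>0" by (rule finite_subset[OF \<Omega>0(1) assms(1)])
    have c1: "count M y \<le> count (\<Sum>i\<in>\<Omega>0. a i) y" for y by (rule mset_subset_eq_count[OF \<Omega>0(3)])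
    have cx: "count (\<Sum>i\<in>\<Omega>0. a i) x = count M x"
    proof -
      from False obtain y where y: "count (add_mset x M) y > count (\<Sum>i\<in>\<Omega>0. a i) y"
        using mset_subset_eqI[of "add_mset x M" "\<Sum>i\<in>\<Omega>0. a i"] not_le by metis
      then have "y = x" using c1[of y] by (auto split: if_splits)
      then show ?thesis using y c1[of x] by simp
    qed
    have "count (add_mset x M) x \<le> count (\<Sum>i\<in>I. a i) x" by (rule mset_subset_eq_count[OF add.prems])
    moreover have "(\<Sum>i\<in>I. a i) = (\<Sum>i\<in>I - \<Omega>0. a i) + (\<Sum>i\<in>\<Omega>0. a i)" by (rule sum.subset_diff[OF \<Omega>0(1) assms(1)])
    ultimately have "count (\<Sum>i\<in>I - \<Omega>0. a i) x \<ge> 1" using cx by simp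
    then have "(\<Sum>i\<in>I - \<Omega>0. count (a i) x) \<noteq> 0" by (simp add: count_sum)
    then obtain i where i: "i \<in> I - \<Omega>0" "count (a i) x \<noteq> 0" by (rule sum.not_neutral_contains_not_neutral)
    define \<Omega> where "\<Omega> = insert i \<Omega>0"
    have s: "(\<Sum>j\<in>\<Omega>. a j) = a i + (\<Sum>j\<in>\<Omega>0. a j)" unfolding \<Omega>_def using i fin0 by simp
    have "add_mset x M \<subseteq># (\<Sum>j\<in>\<Omega>. a j)"
    proof (rule mset_subset_eqI)
      fix y show "count (add_mset x M) y \<le> count (\<Sum>j\<in>\<Omega>. a j) y"
        unfolding s using c1[of y] cx i(2) by auto
    qed
    moreover have "card \<Omega> \<le> size (add_mset x M)" unfolding \<Omega>_def using fin0 i \<Omega>0(2) by simp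
    moreover have "\<Omega> \<subseteq> I" using i \<Omega>0 \<Omega>_def by auto
    ultimately show ?thesis by blast
  qed
qed

lemma zss_cancel:
  assumes "comm_group G" "V \<in> zss G" "V + D \<in> zss G" shows "D \<in> zss G"
proof -
  interpret comm_group G by fact
  obtain vs where vs: "mset vs = V" "list_prod G vs = \<one>\<^bsub>G\<^esub>" "set vs \<subseteq> carrier G" using zss_E[OF assms(2)] by blast
  obtain zs where zs: "mset zs = V + D" "list_prod G zs = \<one>\<^bsub>G\<^esub>" "set zs \<subseteq> carrier G" using zss_E[OF assms(3)] by blast
  have cD: "set_mset D \<subseteq> carrier G" using assms(3) unfolding zss_def by auto
  obtain ys where ys: "mset ys = D" using ex_mset by blast
  have sy: "set ys \<subseteq> carrier G" using cD ys by auto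
  have "list_prod G zs = list_prod G (vs @ ys)"
    by (rule list_prod_perm[OF comm_monoid_axioms zs(3)]) (use zs vs ys in simp)
  also have "\<dots> = list_prod G vs \<otimes>\<^bsub>G\<^esub> list_prod G ys" by (rule list_prod_append[OF monoid_axioms vs(3) sy])
  also have "\<dots> = list_prod G ys" using vs(2) list_prod_closed[OF monoid_axioms sy] by simp
  finally have "list_prod G ys = \<one>\<^bsub>G\<^esub>" using zs(2) by simp
  then show ?thesis using zss_I[OF sy] ys by simp
qed

lemma omega_upper:
  assumes "comm_group G" "V \<in> zss G"
  shows "omega_elem G V \<le> enat (size V)"
  unfolding omega_elem_def
proof (rule Inf_lower, simp only: mem_Collect_eq, intro allI impI)
  fix n :: nat and a :: "nat \<Rightarrow> 'a multiset"
  assume n: "n \<ge> 1" and az: "\<forall>i\<in>{1..n}. a i \<in> zss G" and dv: "zss_dvd G V (\<Sum>i\<in>{1..n}. a i)"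
  interpret comm_group G by fact
  obtain C where "(\<Sum>i\<in>{1..n}. a i) = V + C" using dv unfolding zss_dvd_def by blast
  then have "V \<subseteq># (\<Sum>i\<in>{1..n}. a i)" by simp
  then obtain \<Omega> where \<Omega>: "\<Omega> \<subseteq> {1..n}" "card \<Omega> \<le> size V" "V \<subseteq># (\<Sum>i\<in>\<Omega>. a i)"
    using cover[of "{1..n}" V a] by auto
  define D where "D = (\<Sum>i\<in>\<Omega>. a i) - V"
  have VD: "(\<Sum>i\<in>\<Omega>. a i) = V + D" unfolding D_def using \<Omega>(3) by (simp add: subset_mset.add_diff_inverse)
  have "(\<Sum>i\<in>\<Omega>. a i) \<in> zss G" using az \<Omega>(1) by (intro zss_sum[OF monoid_axioms]) blast
  then have "D \<in> zss G" using zss_cancel[OF assms(1,2)] VD by simp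
  then show "\<exists>\<Omega>\<subseteq>{1..n}. enat (card \<Omega>) \<le> enat (size V) \<and> zss_dvd G V (\<Sum>i\<in>\<Omega>. a i)"
    using \<Omega> VD unfolding zss_dvd_def by auto
qed

theorem lemma5p8:
  fixes G :: "('a, 'b) monoid_scheme"
  assumes "group G" and "finite (carrier G)" and "card (carrier G) \<ge> 3"
  shows "enat (davenport G) \<le> omega_grp G \<and>
         (comm_group G \<longrightarrow> enat (davenport G) = omega_grp G)"
proof -
  from atom3[OF assms(1,3)] obtain U3 where U3: "U3 \<in> zss_atoms G" "size U3 = 3" ..
  have "size ` zss_atoms G \<subseteq> {..card (carrier G)}" using atom_size_le[OF assms(1,2)] by auto
  then have fin: "finite (size ` zss_atoms G)" using finite_subset by blast
  have ne: "size ` zss_atoms G \<noteq> {}" using U3 by blast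
  have Dmax: "size V \<le> davenport G" if "V \<in> zss_atoms G" for V unfolding davenport_def using fin that by simp
  obtain U where U: "U \<in> zss_atoms G" "size U = davenport G" unfolding davenport_def using Max_in[OF fin ne] by auto
  have D3: "davenport G \<ge> 3" using Dmax[OF U3(1)] U3(2) by simp
  have part1: "enat (davenport G) \<le> omega_grp G"
  proof -
    have "enat (davenport G) \<le> omega_elem G (image_mset (m_inv G) U)" using omega_lower[OF assms(1) U(1)] U(2) D3 by simp
    also have "\<dots> \<le> omega_grp G" unfolding omega_grp_def by (rule Sup_upper) (use atom_inv[OF assms(1) U(1)] in blast)
    finally show ?thesis .
  qed
  moreover have "comm_group G \<longrightarrow> enat (davenport G) = omega_grp G"
  proof
    assume c: "comm_group G"
    have "omega_grp G \<le> enat (davenport G)" unfolding omega_grp_def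
    proof (rule Sup_least)
      fix x assume "x \<in> omega_elem G ` zss_atoms G"
      then obtain V where V: "V \<in> zss_atoms G" "x = omega_elem G V" by blast
      have "x \<le> enat (size V)" using omega_upper[OF c] V unfolding zss_atoms_def by auto
      also have "\<dots> \<le> enat (davenport G)" using Dmax[OF V(1)] by simp
      finally show "x \<le> enat (davenport G)" .
    qed
    then show "enat (davenport G) = omega_grp G" using part1 by simp
  qed
  ultimately show ?thesis by blast
qed


end
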